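(* Let $H$ be a separable complex Hilbert space, $(\Omega,\mu)$ a measure space with positive measure, and let $K\in B(H)$ have closed range. Let $F:\Omega\to H$ be a Parseval continuous $K$-frame of $H$. Then $K^{\dagger}F$ is the canonical dual continuous $K$-Bessel sequence of $F$; that is, $K^{\dagger}F$ is a dual continuous $K$-Bessel sequence of $F$ and $\|T_{K^{\dagger}F}\|\le\|T_G\|$ for every dual continuous $K$-Bessel sequence $G$ of $F$, where $T_{K^\dagger F}$ and $T_G$ denote the analysis operators of $K^{\dagger}F$ and $G$.
   Context: A map $F:\Omega\to H$ is weakly measurable if $\omega\mapsto\langle f,F(\omega)\rangle$ is measurable for every $f\in H$. A continuous Bessel sequence is a weakly measurable $G$ with $\int_\Omega|\langle f,G(\omega)\rangle|^2\,d\mu(\omega)\le B\|f\|^2$ for all $f\in H$, for some $B>0$; its analysis operator is $T_G:H\to L^2(\Omega,\mu)$, $T_Gf=\{\langle f,G(\omega)\rangle\}_{\omega}$. A Parseval continuous $K$-frame is a weakly measurable $F$ with $\int_\Omega|\langle f,F(\omega)\rangle|^2\,d\mu(\omega)=\|K^{\ast}f\|^2$ for all $f\in H$. A dual continuous $K$-Bessel sequence of $F$ is a continuous Bessel sequence $G$ with $Kf=\int_\Omega\langle f,G(\omega)\rangle F(\omega)\,d\mu(\omega)$ for all $f\in H$. $K^{\dagger}$ denotes the Moore–Penrose pseudo-inverse of the closed-range operator $K$. *)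

theory Defs
  imports "HOL-Analysis.Analysis"
begin

text \<open>The inner product is linear in the FIRST argument and conjugate-linear in the second
  (the convention of the paper: K f = integral of <f,G w> F w).\<close>

class complex_inner = real_normed_vector +
  fixes scaleC :: "complex \<Rightarrow> 'a \<Rightarrow> 'a"
    and cinner :: "'a \<Rightarrow> 'a \<Rightarrow> complex"
  assumes scaleC_add_right: "scaleC a (x + y) = scaleC a x + scaleC a y"
    and scaleC_add_left: "scaleC (a + b) x = scaleC a x + scaleC b x"
    and scaleC_scaleC: "scaleC a (scaleC b x) = scaleC (a * b) x"
    and scaleC_one: "scaleC 1 x = x"
    and scaleR_scaleC: "scaleR r x = scaleC (complex_of_real r) x"
    and cinner_commute: "cinner x y = cnj (cinner y x)"
    and cinner_add_left: "cinner (x + y) z = cinner x z + cinner y z"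
    and cinner_scaleC_left: "cinner (scaleC a x) y = a * cinner x y"
    and cinner_self_nonneg: "Im (cinner x x) = 0 \<and> 0 \<le> Re (cinner x x)"
    and norm_eq_sqrt_cinner: "norm x = sqrt (Re (cinner x x))"

class chilbert_space = complex_inner + complete_space

definition bounded_clinear :: "('a::complex_inner \<Rightarrow> 'b::complex_inner) \<Rightarrow> bool" where
  "bounded_clinear T \<longleftrightarrow> bounded_linear T \<and> (\<forall>c x. T (scaleC c x) = scaleC c (T x))"

definition is_adjoint :: "('a::complex_inner \<Rightarrow> 'b::complex_inner) \<Rightarrow> ('b \<Rightarrow> 'a) \<Rightarrow> bool" where
  "is_adjoint T S \<longleftrightarrow> (\<forall>x y. cinner (T x) y = cinner x (S y))"

definition adj :: "('a::complex_inner \<Rightarrow> 'b::complex_inner) \<Rightarrow> ('b \<Rightarrow> 'a)" where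
  "adj T = (SOME S. is_adjoint T S)"

text \<open>Moore--Penrose pseudo-inverse: the unique bounded operator satisfying the four
  Penrose equations (for closed-range bounded operators it exists and is unique).\<close>
definition pinv :: "('a::complex_inner \<Rightarrow> 'b::complex_inner) \<Rightarrow> ('b \<Rightarrow> 'a)" where
  "pinv T = (THE S. bounded_clinear S \<and> T \<circ> S \<circ> T = T \<and> S \<circ> T \<circ> S = S
                  \<and> is_adjoint (T \<circ> S) (T \<circ> S) \<and> is_adjoint (S \<circ> T) (S \<circ> T))"

definition separable_space :: "'a::metric_space itself \<Rightarrow> bool" where
  "separable_space _ \<longleftrightarrow> (\<exists>D::'a set. countable D \<and> closure D = UNIV)"

definition weakly_measurable :: "'b measure \<Rightarrow> ('b \<Rightarrow> 'a::complex_inner) \<Rightarrow> bool" where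
  "weakly_measurable M F \<longleftrightarrow> (\<forall>f. (\<lambda>\<omega>. cinner f (F \<omega>)) \<in> borel_measurable M)"

definition cont_bessel :: "'b measure \<Rightarrow> ('b \<Rightarrow> 'a::complex_inner) \<Rightarrow> bool" where
  "cont_bessel M G \<longleftrightarrow> weakly_measurable M G \<and>
     (\<exists>B>0. \<forall>f. (\<integral>\<^sup>+\<omega>. ennreal ((cmod (cinner f (G \<omega>)))\<^sup>2) \<partial>M) \<le> ennreal (B * (norm f)\<^sup>2))"

definition parseval_cont_K_frame :: "'b measure \<Rightarrow> ('a::complex_inner \<Rightarrow> 'a) \<Rightarrow> ('b \<Rightarrow> 'a) \<Rightarrow> bool" where
  "parseval_cont_K_frame M K F \<longleftrightarrow> weakly_measurable M F \<and>
     (\<forall>f. (\<integral>\<^sup>+\<omega>. ennreal ((cmod (cinner f (F \<omega>)))\<^sup>2) \<partial>M) = ennreal ((norm (adj K f))\<^sup>2))"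

text \<open>Dual continuous K-Bessel sequence; the H-valued integral is understood in the weak sense:
  <K f, h> = integral of <f, G w> <F w, h>.\<close>
definition dual_cont_K_bessel :: "'b measure \<Rightarrow> ('a::complex_inner \<Rightarrow> 'a) \<Rightarrow> ('b \<Rightarrow> 'a) \<Rightarrow> ('b \<Rightarrow> 'a) \<Rightarrow> bool" where
  "dual_cont_K_bessel M K F G \<longleftrightarrow> cont_bessel M G \<and>
     (\<forall>f h. cinner (K f) h = (\<integral>\<omega>. cinner f (G \<omega>) * cinner (F \<omega>) h \<partial>M))"

text \<open>Operator norm of the analysis operator T_G : H \<rightarrow> L^2(M), T_G f = <f, G(.)>.\<close>
definition analysis_norm :: "'b measure \<Rightarrow> ('b \<Rightarrow> 'a::complex_inner) \<Rightarrow> real" where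
  "analysis_norm M G = (SUP f\<in>{f. norm f \<le> 1}.
      sqrt (enn2real (\<integral>\<^sup>+\<omega>. ennreal ((cmod (cinner f (G \<omega>)))\<^sup>2) \<partial>M)))"

end

theory Submission
  imports Defs
begin


subclass (in chilbert_space) banach ..


lemma cinner_add_right: "cinner x (y + z) = cinner x y + cinner x z"
  by (metis cinner_commute cinner_add_left complex_cnj_add)

lemma cinner_scaleC_right: "cinner x (scaleC a y) = cnj a * cinner x y"
  by (metis cinner_commute cinner_scaleC_left complex_cnj_mult)

lemma cinner_zero_left [simp]: "cinner 0 y = 0"
  using cinner_add_left[of 0 0 y] by simp

lemma cinner_zero_right [simp]: "cinner x 0 = 0"
  using cinner_add_right[of x 0 0] by simp

lemma cinner_minus_left: "cinner (- x) y = - cinner x y"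
  using cinner_add_left[of x "-x" y] by (simp add: add_eq_0_iff)

lemma cinner_minus_right: "cinner x (- y) = - cinner x y"
  using cinner_add_right[of x y "-y"] by (simp add: add_eq_0_iff)

lemma cinner_diff_left: "cinner (x - y) z = cinner x z - cinner y z"
  using cinner_add_left[of x "-y" z] by (simp add: cinner_minus_left)

lemma cinner_diff_right: "cinner x (y - z) = cinner x y - cinner x z"
  using cinner_add_right[of x y "-z"] by (simp add: cinner_minus_right)

lemma scaleC_zero_right [simp]: "scaleC a 0 = 0"
  using scaleC_add_right[of a 0 0] by simp

lemma scaleC_zero_left [simp]: "scaleC 0 x = 0"
  using scaleC_add_left[of 0 0 x] by simp

lemma scaleC_minus_right: "scaleC a (- x) = - scaleC a x"
  using scaleC_add_right[of a x "-x"] by (simp add: add_eq_0_iff)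

lemma scaleC_diff_right: "scaleC a (x - y) = scaleC a x - scaleC a y"
  using scaleC_add_right[of a x "-y"] by (simp add: scaleC_minus_right)

lemma scaleC_minus_left: "scaleC (- a) x = - scaleC a x"
  using scaleC_add_left[of a "-a" x] by (simp add: add_eq_0_iff)

lemma scaleC_diff_left: "scaleC (a - b) x = scaleC a x - scaleC b x"
  using scaleC_add_left[of a "-b" x] by (simp add: scaleC_minus_left)

lemma scaleC_of_real: "scaleC (complex_of_real r) x = r *\<^sub>R x"
  by (simp add: scaleR_scaleC)

lemma cinner_self: "cinner x x = complex_of_real ((norm x)\<^sup>2)"
proof -
  have "(norm x)\<^sup>2 = Re (cinner x x)"
    using norm_eq_sqrt_cinner[of x] cinner_self_nonneg[of x] by simp
  then show ?thesis using cinner_self_nonneg[of x] by (simp add: complex_eq_iff)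
qed

lemma cinner_self2: "(complex_of_real (norm x))\<^sup>2 = cinner x x"
  by (simp add: cinner_self)

lemma cinner_self_eq_zero: "cinner x x = 0 \<longleftrightarrow> x = 0"
  by (simp add: cinner_self)

lemma cinner_ext: assumes "\<And>z. cinner z x = cinner z y" shows "x = y"
proof -
  have "cinner (x - y) (x - y) = 0"
    using assms[of "x - y"] by (simp add: cinner_diff_right)
  then show ?thesis by (simp add: cinner_self_eq_zero)
qed

lemma cinner_ext_left: assumes "\<And>z. cinner x z = cinner y z" shows "x = y"
  by (rule cinner_ext) (metis assms cinner_commute)

lemma norm_scaleC: "norm (scaleC c x) = cmod c * norm x"
proof -
  have "complex_of_real ((norm (scaleC c x))\<^sup>2) = c * cnj c * complex_of_real ((norm x)\<^sup>2)"
    by (simp add: cinner_self2 cinner_scaleC_left cinner_scaleC_right mult.assoc)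
  also have "c * cnj c = complex_of_real ((cmod c)\<^sup>2)"
    by (simp add: complex_mult_cnj cmod_power2)
  finally have "(norm (scaleC c x))\<^sup>2 = ((cmod c) * norm x)\<^sup>2"
    by (metis of_real_eq_iff of_real_mult power_mult_distrib)
  then show ?thesis by (simp add: power2_eq_iff_nonneg)
qed

lemma norm_square_expand:
  "(norm (x + y))\<^sup>2 = (norm x)\<^sup>2 + (norm y)\<^sup>2 + 2 * Re (cinner x y)"
proof -
  have "complex_of_real ((norm (x + y))\<^sup>2) = cinner x x + cinner x y + cinner y x + cinner y y"
    by (simp add: cinner_self2 cinner_add_left cinner_add_right)
  then have "(norm (x + y))\<^sup>2 = Re (cinner x x + cinner x y + cinner y x + cinner y y)"
    by (metis Re_complex_of_real)
  also have "\<dots> = (norm x)\<^sup>2 + (norm y)\<^sup>2 + 2 * Re (cinner x y)"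
    using cinner_commute[of y x] by (simp add: cinner_self)
  finally show ?thesis .
qed

lemma cauchy_schwarz: "cmod (cinner x y) \<le> norm x * norm y"
proof (cases "y = 0")
  case True then show ?thesis by simp
next
  case False
  define n where "n = (norm y)\<^sup>2"
  have n: "n > 0" using False by (simp add: n_def)
  define c where "c = cinner x y"
  define t where "t = c / complex_of_real n"
  have "complex_of_real ((norm (x - scaleC t y))\<^sup>2) = cinner x x - cnj t * c - t * cnj c + t * cnj t * complex_of_real n"
    by (simp add: cinner_self2 cinner_diff_left cinner_diff_right cinner_scaleC_left
        cinner_scaleC_right c_def n_def algebra_simps cinner_commute[of y x])
  also have "\<dots> = complex_of_real ((norm x)\<^sup>2 - (cmod c)\<^sup>2 / n)"
  proof -
    have cc: "c * cnj c = complex_of_real ((cmod c)\<^sup>2)"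
      by (simp add: complex_mult_cnj cmod_power2)
    have e1: "cnj t * c = complex_of_real ((cmod c)\<^sup>2 / n)"
      using cc by (simp add: t_def mult.commute)
    have e2: "t * cnj c = complex_of_real ((cmod c)\<^sup>2 / n)"
      using cc by (simp add: t_def)
    have e3: "t * cnj t * complex_of_real n = complex_of_real ((cmod c)\<^sup>2 / n)"
      using cc n by (simp add: t_def power2_eq_square)
    show ?thesis by (simp add: e1 e2 e3 cinner_self)
  qed
  finally have "(norm (x - scaleC t y))\<^sup>2 = (norm x)\<^sup>2 - (cmod c)\<^sup>2 / n"
    using of_real_eq_iff by blast
  then have "(cmod c)\<^sup>2 / n \<le> (norm x)\<^sup>2"
    by (metis diff_ge_0_iff_ge zero_le_power2)
  then have "(cmod c)\<^sup>2 \<le> (norm x * norm y)\<^sup>2"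
    using n by (simp add: n_def field_simps power_mult_distrib)
  then show ?thesis unfolding c_def
    by (meson mult_nonneg_nonneg norm_ge_zero power2_le_imp_le)
qed




lemma mult_cnj_cmod: "c * cnj c = complex_of_real ((cmod c)\<^sup>2)"
  by (simp add: complex_mult_cnj cmod_power2)
lemma mult_cnj_cmod': "c * cnj c = (complex_of_real (cmod c))\<^sup>2"
  using mult_cnj_cmod[of c] by simp
lemma cnj_mult_cmod': "cnj c * c = (complex_of_real (cmod c))\<^sup>2"
  using mult_cnj_cmod'[of c] by (simp add: mult.commute)

definition csubspace :: "'a::complex_inner set \<Rightarrow> bool" where
  "csubspace V \<longleftrightarrow> 0 \<in> V \<and> (\<forall>x\<in>V. \<forall>y\<in>V. x + y \<in> V) \<and> (\<forall>c. \<forall>x\<in>V. scaleC c x \<in> V)"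

lemma csubspace_0: "csubspace V \<Longrightarrow> 0 \<in> V"
  by (simp add: csubspace_def)
lemma csubspace_add: "csubspace V \<Longrightarrow> x \<in> V \<Longrightarrow> y \<in> V \<Longrightarrow> x + y \<in> V"
  by (simp add: csubspace_def)
lemma csubspace_scaleC: "csubspace V \<Longrightarrow> x \<in> V \<Longrightarrow> scaleC c x \<in> V"
  by (simp add: csubspace_def)
lemma csubspace_minus: "csubspace V \<Longrightarrow> x \<in> V \<Longrightarrow> - x \<in> V"
  using csubspace_scaleC[of V x "-1"] by (simp add: scaleC_minus_left scaleC_one)
lemma csubspace_diff: "csubspace V \<Longrightarrow> x \<in> V \<Longrightarrow> y \<in> V \<Longrightarrow> x - y \<in> V"
  using csubspace_add[of V x "-y"] csubspace_minus[of V y] by simp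
lemma csubspace_scaleR: "csubspace V \<Longrightarrow> x \<in> V \<Longrightarrow> scaleR r x \<in> V"
  by (simp add: csubspace_scaleC scaleR_scaleC)

lemma norm_diff_square_expand:
  "(norm (x - y))\<^sup>2 = (norm x)\<^sup>2 + (norm y)\<^sup>2 - 2 * Re (cinner x y)"
  using norm_square_expand[of x "-y"] by (simp add: cinner_minus_right)

lemma proj_exists:
  fixes V :: "'a::chilbert_space set"
  assumes V: "csubspace V" "closed V"
  shows "\<exists>p\<in>V. \<forall>v\<in>V. cinner (x - p) v = 0"
proof -
  define D where "D = Inf ((\<lambda>v. (norm (x - v))\<^sup>2) ` V)"
  have ne: "(\<lambda>v. (norm (x - v))\<^sup>2) ` V \<noteq> {}" using csubspace_0[OF V(1)] by blast
  have bdd: "bdd_below ((\<lambda>v. (norm (x - v))\<^sup>2) ` V)"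
    by (rule bdd_belowI[of _ 0]) auto
  have Dle: "D \<le> (norm (x - v))\<^sup>2" if "v \<in> V" for v
    unfolding D_def using bdd that by (auto intro: cInf_lower)
  have "\<exists>v\<in>V. (norm (x - v))\<^sup>2 < D + 1 / real (Suc n)" for n
  proof -
    have "Inf ((\<lambda>v. (norm (x - v))\<^sup>2) ` V) < D + 1 / real (Suc n)"
      unfolding D_def by simp
    from cInf_lessD[OF ne this] show ?thesis by auto
  qed
  then obtain vs where vs: "\<And>n. vs n \<in> V" "\<And>n. (norm (x - vs n))\<^sup>2 < D + 1 / real (Suc n)"
    by metis
  have par: "(norm (vs m - vs n))\<^sup>2 \<le> 2 / real (Suc m) + 2 / real (Suc n)" for m n
  proof -
    define a where "a = x - vs m"
    define b where "b = x - vs n"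
    have "(norm (a - b))\<^sup>2 + (norm (a + b))\<^sup>2 = 2 * (norm a)\<^sup>2 + 2 * (norm b)\<^sup>2"
      using norm_square_expand[of a b] norm_diff_square_expand[of a b] by simp
    moreover have "a - b = vs n - vs m" by (simp add: a_def b_def)
    moreover have "a + b = 2 *\<^sub>R (x - (1/2) *\<^sub>R (vs m + vs n))"
      by (simp add: a_def b_def algebra_simps scaleR_2)
    moreover have "(1/2) *\<^sub>R (vs m + vs n) \<in> V"
      using V(1) vs(1) by (simp add: csubspace_scaleR csubspace_add)
    then have "D \<le> (norm (x - (1/2) *\<^sub>R (vs m + vs n)))\<^sup>2" by (rule Dle)
    ultimately have "(norm (vs n - vs m))\<^sup>2 + 4 * D \<le> 2 * (norm a)\<^sup>2 + 2 * (norm b)\<^sup>2"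
      by (simp add: power_mult_distrib)
    moreover have "(norm a)\<^sup>2 < D + 1 / real (Suc m)" "(norm b)\<^sup>2 < D + 1 / real (Suc n)"
      using vs(2) by (auto simp: a_def b_def)
    ultimately show ?thesis by (simp add: norm_minus_commute)
  qed
  have "Cauchy vs"
  proof (rule CauchyI)
    fix e :: real assume e: "e > 0"
    obtain M :: nat where M: "4 / e\<^sup>2 < real M" using reals_Archimedean2 by blast
    show "\<exists>M. \<forall>m\<ge>M. \<forall>n\<ge>M. norm (vs m - vs n) < e"
    proof (intro exI allI impI)
      fix m n assume mn: "M \<le> m" "M \<le> n"
      have "2 / real (Suc m) \<le> 2 / real (Suc M)" "2 / real (Suc n) \<le> 2 / real (Suc M)"
        using mn by (auto intro!: divide_left_mono)
      moreover have "4 / real (Suc M) < e\<^sup>2"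
        using M e by (simp add: field_simps) (smt (verit) zero_less_power)
      ultimately have "(norm (vs m - vs n))\<^sup>2 < e\<^sup>2" using par[of m n] by linarith
      then show "norm (vs m - vs n) < e"
        using e by (simp add: power_less_imp_less_base)
    qed
  qed
  then obtain p where p: "vs \<longlonglongrightarrow> p" using Cauchy_convergent_iff convergent_def by blast
  have pV: "p \<in> V"
    using closed_sequentially[OF V(2)] vs(1) p by blast
  have "(\<lambda>n. (norm (x - vs n))\<^sup>2) \<longlonglongrightarrow> (norm (x - p))\<^sup>2"
    by (intro tendsto_intros p)
  moreover have "(\<lambda>n. D + 1 / real (Suc n)) \<longlonglongrightarrow> D"
    using tendsto_add[OF tendsto_const LIMSEQ_inverse_real_of_nat, of D]
    by (simp add: inverse_eq_divide)
  ultimately have pmin: "(norm (x - p))\<^sup>2 \<le> D"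
    by (rule LIMSEQ_le) (use vs(2) less_imp_le in blast)
  show ?thesis
  proof (intro bexI[OF _ pV] ballI)
    fix v assume v: "v \<in> V"
    define z where "z = x - p"
    define c where "c = cinner z v"
    show "cinner (x - p) v = 0"
    proof (rule ccontr)
      assume "cinner (x - p) v \<noteq> 0"
      then have c0: "cmod c > 0" by (simp add: c_def z_def)
      define s where "s = 1 / ((norm v)\<^sup>2 + 1)"
      have np: "0 < 1 + (norm v)\<^sup>2" by (simp add: add_pos_nonneg)
      have s: "s > 0" "s * (norm v)\<^sup>2 < 1" using np by (auto simp: s_def field_simps)
      define t where "t = complex_of_real s * c"
      have "p + scaleC t v \<in> V" using V(1) pV v by (simp add: csubspace_add csubspace_scaleC)
      then have "D \<le> (norm (x - (p + scaleC t v)))\<^sup>2" by (rule Dle)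
      moreover have "x - (p + scaleC t v) = z - scaleC t v" by (simp add: z_def)
      ultimately have "(norm z)\<^sup>2 \<le> (norm (z - scaleC t v))\<^sup>2"
        using pmin by (metis order_trans z_def)
      also have "\<dots> = (norm z)\<^sup>2 + (s * cmod c)\<^sup>2 * (norm v)\<^sup>2 - 2 * s * (cmod c)\<^sup>2"
      proof -
        have "cinner z (scaleC t v) = complex_of_real (s * (cmod c)\<^sup>2)"
          by (simp add: cinner_scaleC_right t_def c_def[symmetric] mult_cnj_cmod' cnj_mult_cmod' mult.assoc)
        then show ?thesis
          using s(1) by (simp add: norm_diff_square_expand norm_scaleC t_def norm_mult power_mult_distrib)
      qed
      finally have "2 * s * (cmod c)\<^sup>2 \<le> (s * cmod c)\<^sup>2 * (norm v)\<^sup>2" by simp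
      then have "2 * s * (cmod c)\<^sup>2 \<le> (s * (norm v)\<^sup>2) * (s * (cmod c)\<^sup>2)"
        by (simp add: power_mult_distrib algebra_simps power2_eq_square)
      also have "\<dots> \<le> 1 * (s * (cmod c)\<^sup>2)"
        using s c0 by (intro mult_right_mono) auto
      finally show False using s c0 by simp
    qed
  qed
qed

definition proj :: "'a::complex_inner set \<Rightarrow> 'a \<Rightarrow> 'a" where
  "proj V x = (THE p. p \<in> V \<and> (\<forall>v\<in>V. cinner (x - p) v = 0))"

lemma proj_uniq:
  assumes V: "csubspace V" and p: "p \<in> V" "\<forall>v\<in>V. cinner (x - p) v = 0"
    and q: "q \<in> V" "\<forall>v\<in>V. cinner (x - q) v = 0"
  shows "p = q"
proof -
  have "q - p \<in> V" using V p q by (simp add: csubspace_diff)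
  then have "cinner (x - p) (q - p) - cinner (x - q) (q - p) = 0" using p q by simp
  then have "cinner (q - p) (q - p) = 0" by (simp add: cinner_diff_left[symmetric])
  then show ?thesis by (simp add: cinner_self_eq_zero)
qed

locale closed_csub =
  fixes V :: "'a::chilbert_space set"
  assumes csub: "csubspace V" and clo: "closed V"
begin

lemma proj_prop: "proj V x \<in> V \<and> (\<forall>v\<in>V. cinner (x - proj V x) v = 0)"
proof -
  obtain p where p: "p \<in> V \<and> (\<forall>v\<in>V. cinner (x - p) v = 0)" using proj_exists[OF csub clo] by blast
  show ?thesis unfolding proj_def
  proof (rule theI)
    show "p \<in> V \<and> (\<forall>v\<in>V. cinner (x - p) v = 0)" by (fact p)
    fix y assume "y \<in> V \<and> (\<forall>v\<in>V. cinner (x - y) v = 0)"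
    then show "y = p" using proj_uniq[OF csub, of y x p] p by blast
  qed
qed

lemma proj_in: "proj V x \<in> V" using proj_prop by blast
lemma proj_orth: "v \<in> V \<Longrightarrow> cinner (x - proj V x) v = 0" using proj_prop by blast
lemma proj_orth': "v \<in> V \<Longrightarrow> cinner v (x - proj V x) = 0"
  using proj_orth cinner_commute by (metis complex_cnj_zero)

lemma proj_eqI: "p \<in> V \<Longrightarrow> (\<And>v. v \<in> V \<Longrightarrow> cinner (x - p) v = 0) \<Longrightarrow> proj V x = p"
  using proj_uniq[OF csub] proj_prop by blast

lemma proj_id: "x \<in> V \<Longrightarrow> proj V x = x"
  by (rule proj_eqI) auto

lemma proj_add: "proj V (x + y) = proj V x + proj V y"
proof (rule proj_eqI)
  show "proj V x + proj V y \<in> V" by (simp add: csubspace_add[OF csub] proj_in)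
  fix v assume v: "v \<in> V"
  have "x + y - (proj V x + proj V y) = (x - proj V x) + (y - proj V y)" by simp
  then show "cinner (x + y - (proj V x + proj V y)) v = 0"
    using v by (simp only: cinner_add_left proj_orth) simp
qed

lemma proj_scaleC: "proj V (scaleC c x) = scaleC c (proj V x)"
proof (rule proj_eqI)
  show "scaleC c (proj V x) \<in> V" by (simp add: csubspace_scaleC[OF csub] proj_in)
  fix v assume "v \<in> V"
  then show "cinner (scaleC c x - scaleC c (proj V x)) v = 0"
    by (simp add: scaleC_diff_right[symmetric] cinner_scaleC_left proj_orth)
qed

lemma proj_selfadj: "cinner (proj V x) y = cinner x (proj V y)"
proof -
  have "cinner (proj V x) y = cinner (proj V x) (proj V y) + cinner (proj V x) (y - proj V y)"
    by (simp add: cinner_diff_right)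
  also have "\<dots> = cinner (proj V x) (proj V y)" by (simp add: proj_orth' proj_in)
  also have "\<dots> = cinner (proj V x) (proj V y) + cinner (x - proj V x) (proj V y)"
    by (simp add: proj_orth proj_in)
  also have "\<dots> = cinner x (proj V y)" by (simp add: cinner_diff_left)
  finally show ?thesis .
qed

lemma proj_zero: "(\<And>v. v \<in> V \<Longrightarrow> cinner x v = 0) \<Longrightarrow> proj V x = 0"
  by (rule proj_eqI) (auto simp: csubspace_0[OF csub])

lemma proj_proj: "proj V (proj V x) = proj V x"
  by (simp add: proj_id proj_in)

end

lemma bounded_clinear_add: "bounded_clinear K \<Longrightarrow> K (x + y) = K x + K y"
  by (simp add: bounded_clinear_def linear_add bounded_linear.linear)
lemma bounded_clinear_scaleC: "bounded_clinear K \<Longrightarrow> K (scaleC c x) = scaleC c (K x)"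
  by (simp add: bounded_clinear_def)
lemma bounded_clinear_diff: "bounded_clinear K \<Longrightarrow> K (x - y) = K x - K y"
  by (simp add: bounded_clinear_def linear_diff bounded_linear.linear)
lemma bounded_clinear_zero: "bounded_clinear K \<Longrightarrow> K 0 = 0"
  by (simp add: bounded_clinear_def linear_0 bounded_linear.linear)
lemma bounded_clinear_bounded: "bounded_clinear K \<Longrightarrow> \<exists>C>0. \<forall>x. norm (K x) \<le> norm x * C"
  by (simp add: bounded_clinear_def bounded_linear.pos_bounded)

lemma riesz:
  fixes \<phi> :: "'a::chilbert_space \<Rightarrow> complex"
  assumes lin: "bounded_linear \<phi>" and hom: "\<And>c x. \<phi> (scaleC c x) = c * \<phi> x"
  shows "\<exists>z. \<forall>x. \<phi> x = cinner x z"
proof (cases "\<forall>x. \<phi> x = 0")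
  case True then show ?thesis by (intro exI[of _ 0]) simp
next
  case False
  then obtain x0 where x0: "\<phi> x0 \<noteq> 0" by blast
  define N where "N = {x. \<phi> x = 0}"
  have add: "\<phi> (x + y) = \<phi> x + \<phi> y" for x y using lin by (simp add: linear_add bounded_linear.linear)
  have diff: "\<phi> (x - y) = \<phi> x - \<phi> y" for x y using lin by (simp add: linear_diff bounded_linear.linear)
  have csN: "csubspace N"
    unfolding csubspace_def N_def using hom[of 0 0] by (simp add: add hom)
  have clN: "closed N"
    unfolding N_def
    by (rule closed_Collect_eq) (auto intro: linear_continuous_on lin)
  interpret closed_csub N using csN clN by unfold_locales
  define u where "u = x0 - proj N x0"
  have phiu: "\<phi> u = \<phi> x0" using proj_in[of x0] by (simp add: u_def diff N_def)
  have uorth: "cinner x u = 0" if "x \<in> N" for x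
    using proj_orth'[OF that, of x0] by (simp add: u_def)
  have uu: "cinner u u \<noteq> 0" using phiu x0 by (auto simp: cinner_self_eq_zero lin bounded_linear.linear linear_0)
  define z where "z = scaleC (cnj (\<phi> u / cinner u u)) u"
  show ?thesis
  proof (intro exI allI)
    fix x
    define w where "w = scaleC (\<phi> x) u - scaleC (\<phi> u) x"
    have "w \<in> N" by (simp add: N_def w_def diff hom)
    then have "cinner w u = 0" by (rule uorth)
    then have "\<phi> x * cinner u u = \<phi> u * cinner x u"
      by (simp add: w_def cinner_diff_left cinner_scaleC_left)
    then show "\<phi> x = cinner x z"
      using uu by (simp add: z_def cinner_scaleC_right field_simps)
  qed
qed

lemma adj_exists:
  fixes K :: "'a::chilbert_space \<Rightarrow> 'b::complex_inner"
  assumes K: "bounded_clinear K"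
  shows "is_adjoint K (adj K)"
proof -
  obtain C where C: "\<And>x. norm (K x) \<le> norm x * C" using bounded_clinear_bounded[OF K] by blast
  have "\<exists>z. \<forall>x. cinner (K x) y = cinner x z" for y
  proof (rule riesz)
    show "bounded_linear (\<lambda>x. cinner (K x) y)"
    proof (rule bounded_linear_intro[where K = "C * norm y"])
      show "cinner (K (x + x')) y = cinner (K x) y + cinner (K x') y" for x x'
        by (simp add: bounded_clinear_add[OF K] cinner_add_left)
      show "cinner (K (r *\<^sub>R x)) y = r *\<^sub>R cinner (K x) y" for r x
        by (simp add: scaleR_scaleC bounded_clinear_scaleC[OF K] cinner_scaleC_left scaleR_conv_of_real)
      show "norm (cinner (K x) y) \<le> norm x * (C * norm y)" for x
        using cauchy_schwarz[of "K x" y] C[of x]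
        by (smt (verit, ccfv_SIG) mult.assoc mult_right_mono norm_ge_zero)
    qed
    show "cinner (K (scaleC c x)) y = c * cinner (K x) y" for c x
      by (simp add: bounded_clinear_scaleC[OF K] cinner_scaleC_left)
  qed
  then have "\<exists>S. \<forall>y x. cinner (K x) y = cinner x (S y)" by metis
  then have "\<exists>S. is_adjoint K S" unfolding is_adjoint_def by blast
  then show ?thesis unfolding adj_def by (rule someI_ex)
qed

lemma adjoint_linear:
  assumes "is_adjoint K S"
  shows "S (x + y) = S x + S y" and "S (scaleC c x) = scaleC c (S x)"
proof -
  have a: "cinner z (S w) = cinner (K z) w" for z w using assms unfolding is_adjoint_def by simp
  show "S (x + y) = S x + S y"
    by (rule cinner_ext) (simp only: a cinner_add_right)
  show "S (scaleC c x) = scaleC c (S x)"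
    by (rule cinner_ext) (simp only: a cinner_scaleC_right)
qed




lemma open_mapping_step_baire:
  fixes K :: "'a::banach \<Rightarrow> 'b::banach"
  assumes K: "bounded_linear K" and R: "closed (range K)"
  shows "\<exists>n::nat. \<exists>y0 r. r > 0 \<and> y0 \<in> range K \<and>
           (\<forall>y\<in>range K. dist y y0 < r \<longrightarrow> y \<in> closure (K ` ball 0 (real n)))"
proof -
  define X where "X = top_of_set (range K)"
  define G where "G = (\<lambda>n::nat. closure (K ` ball 0 (real n)))"
  have Gsub: "G n \<subseteq> range K" for n
    unfolding G_def using R by (intro closure_minimal) auto
  have "\<exists>n. X interior_of G n \<noteq> {}"
  proof (rule ccontr)
    assume "\<not> (\<exists>n. X interior_of G n \<noteq> {})"
    then have emp: "\<And>n. X interior_of G n = {}" by blast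
    have "X interior_of \<Union>(range G) = {}"
    proof (rule Baire_category_alt)
      show "completely_metrizable_space X \<or> locally_compact_space X \<and> regular_space X"
        unfolding X_def
        by (intro disjI1 completely_metrizable_space_closedin completely_metrizable_space_euclidean)
           (simp add: R)
      show "countable (range G)" by simp
      fix T assume "T \<in> range G"
      then obtain n where "T = G n" by blast
      then show "closedin X T \<and> X interior_of T = {}"
        using emp closed_subset[OF Gsub[of n]] unfolding X_def G_def by auto
    qed
    moreover have "range K \<subseteq> \<Union>(range G)"
    proof
      fix y assume "y \<in> range K"
      then obtain x where x: "y = K x" by blast
      obtain n :: nat where "norm x < real n" using reals_Archimedean2 by blast
      then have "y \<in> G n" unfolding G_def using x by (auto intro!: closure_subset[THEN subsetD])
      then show "y \<in> \<Union>(range G)" by blast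
    qed
    then have "X interior_of (range K) \<subseteq> X interior_of \<Union>(range G)"
      by (rule interior_of_mono)
    moreover have "X interior_of (range K) = range K"
      using interior_of_topspace[of X] by (simp add: X_def)
    ultimately show False by auto
  qed
  then obtain n y0 where y0: "y0 \<in> X interior_of G n" by blast
  have op: "openin (top_of_set (range K)) (X interior_of G n)"
    using openin_interior_of X_def by blast
  then have y0R: "y0 \<in> range K"
    using y0 openin_subset[OF op] by auto
  from op y0 obtain r where r: "r > 0" "\<forall>y\<in>range K. dist y y0 < r \<longrightarrow> y \<in> X interior_of G n"
    unfolding openin_euclidean_subtopology_iff by blast
  show ?thesis
    using r interior_of_subset[of X "G n"] y0R unfolding G_def by blast
qed

lemma open_mapping_step_approx:
  fixes K :: "'a::banach \<Rightarrow> 'b::banach"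
  assumes K: "bounded_linear K" and R: "closed (range K)"
  shows "\<exists>M>0. \<forall>y\<in>range K. \<forall>e>0. \<exists>x. norm x \<le> M * norm y \<and> norm (y - K x) < e"
proof -
  obtain n :: nat and y0 r where r: "r > 0" and y0R: "y0 \<in> range K"
    and cl: "\<And>y. y \<in> range K \<Longrightarrow> dist y y0 < r \<Longrightarrow> y \<in> closure (K ` ball 0 (real n))"
    using open_mapping_step_baire[OF K R] by blast
  have app: "\<exists>x. norm x < real n \<and> dist (K x) y < e"
    if a: "y \<in> range K" "dist y y0 < r" "e > 0" for y e
  proof -
    obtain ya where "ya \<in> K ` ball 0 (real n)" "dist ya y < e"
      using cl[OF a(1,2)] a(3) unfolding closure_approachable by blast
    then show ?thesis by (auto simp: mem_ball_0)
  qed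
  have B: "\<exists>x. norm x < 2 * real n \<and> norm (K x - y) < e"
    if y: "y \<in> range K" "norm y < r" and e: "e > 0" for y e
  proof -
    have "y0 + y \<in> range K"
      using y y0R by (auto simp: linear_add[OF bounded_linear.linear[OF K], symmetric])
    moreover have "dist (y0 + y) y0 < r" using y by (simp add: dist_norm)
    ultimately obtain x1 where x1: "norm x1 < real n" "dist (K x1) (y0 + y) < e/2"
      using app e by (meson half_gt_zero)
    obtain x2 where x2: "norm x2 < real n" "dist (K x2) y0 < e/2"
      using app[OF y0R _ half_gt_zero[OF e]] r by auto
    have "norm (x1 - x2) < 2 * real n"
      using x1 x2 norm_triangle_ineq4[of x1 x2] by linarith
    moreover have "K (x1 - x2) - y = (K x1 - (y0 + y)) - (K x2 - y0)"
      by (simp add: linear_diff[OF bounded_linear.linear[OF K]])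
    then have "norm (K (x1 - x2) - y) \<le> norm (K x1 - (y0 + y)) + norm (K x2 - y0)"
      by (metis norm_triangle_ineq4)
    then have "norm (K (x1 - x2) - y) < e"
      using x1(2) x2(2) by (simp add: dist_norm)
    ultimately show ?thesis by blast
  qed
  define M where "M = 4 * (real n + 1) / r"
  have M: "M > 0" using r by (simp add: M_def)
  show ?thesis
  proof (intro exI[of _ M] conjI M ballI allI impI)
    fix y e assume y: "y \<in> range K" and e: "(e::real) > 0"
    show "\<exists>x. norm x \<le> M * norm y \<and> norm (y - K x) < e"
    proof (cases "y = 0")
      case True then show ?thesis using e by (intro exI[of _ 0]) (simp add: linear_0[OF bounded_linear.linear[OF K]])
    next
      case False
      define l where "l = r / (2 * norm y)"
      have l: "l > 0" using False r by (simp add: l_def)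
      have "l *\<^sub>R y \<in> range K" using y by (auto simp: linear_scale[OF bounded_linear.linear[OF K], symmetric])
      moreover have "norm (l *\<^sub>R y) < r" using l r False by (simp add: l_def)
      ultimately obtain x' where x': "norm x' < 2 * real n" "norm (K x' - l *\<^sub>R y) < e * l"
        using B l e by (meson mult_pos_pos)
      define x where "x = (1 / l) *\<^sub>R x'"
      have "norm x = norm x' / l" using l by (simp add: x_def)
      also have "\<dots> \<le> 2 * real n / l" using x' l by (simp add: divide_right_mono)
      also have "\<dots> = 4 * real n / r * norm y" using False r by (simp add: l_def field_simps)
      also have "\<dots> \<le> M * norm y" unfolding M_def using r
        by (intro mult_right_mono divide_right_mono) auto
      finally have nx: "norm x \<le> M * norm y" .
      have "y - K x = (1 / l) *\<^sub>R (l *\<^sub>R y - K x')"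
        using l by (simp add: x_def linear_scale[OF bounded_linear.linear[OF K]] scaleR_diff_right)
      then have "norm (y - K x) = norm (K x' - l *\<^sub>R y) / l"
        using l by (simp add: norm_minus_commute)
      also have "\<dots> < e" using x' l by (simp add: field_simps)
      finally show ?thesis using nx by blast
    qed
  qed
qed

lemma open_mapping_bound:
  fixes K :: "'a::banach \<Rightarrow> 'b::banach"
  assumes K: "bounded_linear K" and R: "closed (range K)"
  shows "\<exists>C>0. \<forall>y\<in>range K. \<exists>x. K x = y \<and> norm x \<le> C * norm y"
proof -
  obtain M where M: "M > 0"
    and ap: "\<And>y e. y \<in> range K \<Longrightarrow> e > 0 \<Longrightarrow> \<exists>x. norm x \<le> M * norm y \<and> norm (y - K x) < e"
    using open_mapping_step_approx[OF K R] by blast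
  have "\<forall>z e. \<exists>x. z \<in> range K \<and> e > 0 \<longrightarrow> norm x \<le> M * norm z \<and> norm (z - K x) < e"
    using ap by blast
  then obtain g where g: "\<And>z e. z \<in> range K \<Longrightarrow> e > 0 \<Longrightarrow> norm (g z e) \<le> M * norm z \<and> norm (z - K (g z e)) < e"
    by metis
  show ?thesis
  proof (intro exI[of _ "2 * M"] conjI ballI)
    show "2 * M > 0" using M by simp
    fix y assume y: "y \<in> range K"
    show "\<exists>x. K x = y \<and> norm x \<le> 2 * M * norm y"
    proof (cases "y = 0")
      case True then show ?thesis by (intro exI[of _ 0]) (simp add: linear_0[OF bounded_linear.linear[OF K]])
    next
      case False
      define \<epsilon> where "\<epsilon> = norm y"
      have eps: "\<epsilon> > 0" using False by (simp add: \<epsilon>_def)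
      define zs where "zs = rec_nat y (\<lambda>k z. z - K (g z (\<epsilon> / 2 ^ Suc k)))"
      have zs0: "zs 0 = y" by (simp add: zs_def)
      have zsS: "zs (Suc k) = zs k - K (g (zs k) (\<epsilon> / 2 ^ Suc k))" for k by (simp add: zs_def)
      define xs where "xs k = g (zs k) (\<epsilon> / 2 ^ Suc k)" for k
      have zsR: "zs k \<in> range K" for k
      proof (induction k)
        case 0 then show ?case using y zs0 by simp
      next
        case (Suc k)
        then obtain a where "zs k = K a" by blast
        then have "zs (Suc k) = K (a - g (zs k) (\<epsilon> / 2 ^ Suc k))"
          by (simp add: zsS linear_diff[OF bounded_linear.linear[OF K]])
        then show ?case by blast
      qed
      have gk: "norm (xs k) \<le> M * norm (zs k) \<and> norm (zs (Suc k)) < \<epsilon> / 2 ^ Suc k" for k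
        using g[OF zsR[of k], of "\<epsilon> / 2 ^ Suc k"] eps by (simp add: xs_def zsS)
      have zsn: "norm (zs k) \<le> \<epsilon> / 2 ^ k" for k
      proof (cases k)
        case 0 then show ?thesis by (simp add: zs0 \<epsilon>_def)
      next
        case (Suc j) then show ?thesis using gk[of j] by simp
      qed
      have xsn: "norm (xs k) \<le> M * \<epsilon> * (1/2) ^ k" for k
      proof -
        have "norm (xs k) \<le> M * norm (zs k)" using gk by blast
        also have "\<dots> \<le> M * (\<epsilon> / 2 ^ k)" using zsn M by (intro mult_left_mono) auto
        finally show ?thesis by (simp add: power_divide)
      qed
      have sgeo: "summable (\<lambda>k. M * \<epsilon> * (1/2::real) ^ k)"
        by (intro summable_mult summable_geometric) simp
      have snorm: "summable (\<lambda>k. norm (xs k))"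
        by (rule summable_comparison_test[OF _ sgeo]) (use xsn in auto)
      have sxs: "summable xs" using snorm by (rule summable_norm_cancel)
      define x where "x = suminf xs"
      have "norm x \<le> (\<Sum>k. norm (xs k))" unfolding x_def by (rule summable_norm[OF snorm])
      also have "\<dots> \<le> (\<Sum>k. M * \<epsilon> * (1/2::real) ^ k)"
        by (rule suminf_le[OF _ snorm sgeo]) (use xsn in auto)
      also have "\<dots> = 2 * M * \<epsilon>"
        using suminf_geometric[of "1/2::real"] by (simp add: suminf_mult)
      finally have nx: "norm x \<le> 2 * M * norm y" by (simp add: \<epsilon>_def)
      have "xs sums x" using sxs by (simp add: x_def summable_sums)
      then have s1: "(\<lambda>k. K (xs k)) sums K x" by (rule bounded_linear.sums[OF K])
      have ps: "(\<Sum>k<n. K (xs k)) = y - zs n" for n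
        by (induction n) (simp_all add: zs0 zsS xs_def)
      have "(\<lambda>n. zs n) \<longlonglongrightarrow> 0"
      proof (rule Lim_null_comparison[where g = "\<lambda>n. \<epsilon> * (1/2) ^ n"])
        show "\<forall>\<^sub>F n in sequentially. norm (zs n) \<le> \<epsilon> * (1 / 2) ^ n"
          using zsn by (simp add: power_divide)
        show "(\<lambda>n. \<epsilon> * (1 / 2::real) ^ n) \<longlonglongrightarrow> 0"
          by (intro tendsto_mult_right_zero LIMSEQ_power_zero) simp
      qed
      then have "(\<lambda>n. y - zs n) \<longlonglongrightarrow> y - 0" by (intro tendsto_intros)
      then have "(\<lambda>k. K (xs k)) sums y" by (simp add: sums_def ps)
      then have "K x = y" using s1 sums_unique2 by blast
      then show ?thesis using nx by blast
    qed
  qed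
qed




context closed_csub begin

lemma proj_diff: "proj V (x - y) = proj V x - proj V y"
  using proj_add[of "x - y" y] by simp

lemma proj_pythag: "(norm x)\<^sup>2 = (norm (proj V x))\<^sup>2 + (norm (x - proj V x))\<^sup>2"
proof -
  have "x = proj V x + (x - proj V x)" by simp
  then have "(norm x)\<^sup>2 = (norm (proj V x))\<^sup>2 + (norm (x - proj V x))\<^sup>2 + 2 * Re (cinner (proj V x) (x - proj V x))"
    by (metis norm_square_expand)
  then show ?thesis by (simp add: proj_orth' proj_in)
qed

lemma proj_norm_le: "norm (proj V x) \<le> norm x"
  using proj_pythag[of x]
  by (metis le_add_same_cancel1 norm_ge_zero power2_le_imp_le zero_le_power2)

lemma proj_compl_norm_le: "norm (x - proj V x) \<le> norm x"
  using proj_pythag[of x]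
  by (metis le_add_same_cancel2 norm_ge_zero power2_le_imp_le zero_le_power2)

end

lemma pinv_unique:
  fixes K :: "'a::complex_inner \<Rightarrow> 'a"
  assumes a1: "\<And>x. K (S1 (K x)) = K x" and b1: "\<And>y. S1 (K (S1 y)) = S1 y"
    and c1: "\<And>x y. cinner (K (S1 x)) y = cinner x (K (S1 y))"
    and d1: "\<And>x y. cinner (S1 (K x)) y = cinner x (S1 (K y))"
    and a2: "\<And>x. K (S2 (K x)) = K x" and b2: "\<And>y. S2 (K (S2 y)) = S2 y"
    and c2: "\<And>x y. cinner (K (S2 x)) y = cinner x (K (S2 y))"
    and d2: "\<And>x y. cinner (S2 (K x)) y = cinner x (S2 (K y))"
  shows "S1 = S2"
proof -
  have P: "K (S1 y) = K (S2 y)" for y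
  proof (rule cinner_ext)
    fix z
    have "cinner z (K (S1 y)) = cinner (K (S1 z)) y" by (simp add: c1)
    also have "\<dots> = cinner (K (S2 (K (S1 z)))) y" by (simp add: a2)
    also have "\<dots> = cinner (K (S1 z)) (K (S2 y))" by (simp add: c2)
    also have "\<dots> = cinner z (K (S1 (K (S2 y))))" by (simp add: c1)
    also have "\<dots> = cinner z (K (S2 y))" by (simp add: a1)
    finally show "cinner z (K (S1 y)) = cinner z (K (S2 y))" .
  qed
  have Q: "S1 (K x) = S2 (K x)" for x
  proof (rule cinner_ext)
    fix z
    have "cinner z (S1 (K x)) = cinner (S1 (K z)) x" by (simp add: d1)
    also have "\<dots> = cinner (S1 (K (S2 (K z)))) x" by (simp add: a2)
    also have "\<dots> = cinner (S2 (K z)) (S1 (K x))" by (simp add: d1)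
    also have "\<dots> = cinner z (S2 (K (S1 (K x))))" by (simp add: d2)
    also have "\<dots> = cinner z (S2 (K x))" by (simp add: a1)
    finally show "cinner z (S1 (K x)) = cinner z (S2 (K x))" .
  qed
  show ?thesis
  proof
    fix y
    have "S1 y = S1 (K (S1 y))" by (simp add: b1)
    also have "\<dots> = S2 (K (S1 y))" by (rule Q)
    also have "\<dots> = S2 (K (S2 y))" by (simp add: P)
    also have "\<dots> = S2 y" by (rule b2)
    finally show "S1 y = S2 y" .
  qed
qed

definition MP :: "('a::complex_inner \<Rightarrow> 'a) \<Rightarrow> ('a \<Rightarrow> 'a) \<Rightarrow> bool" where
  "MP K S \<longleftrightarrow> bounded_clinear S \<and> K \<circ> S \<circ> K = K \<and> S \<circ> K \<circ> S = S
                  \<and> is_adjoint (K \<circ> S) (K \<circ> S) \<and> is_adjoint (S \<circ> K) (S \<circ> K)"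

lemma MP_unique: "MP K S1 \<Longrightarrow> MP K S2 \<Longrightarrow> S1 = S2"
  unfolding MP_def is_adjoint_def
  by (rule pinv_unique[of K S1 S2]) (auto simp: fun_eq_iff)

lemma MP_exists:
  fixes K :: "'a::chilbert_space \<Rightarrow> 'a"
  assumes K: "bounded_clinear K" and R: "closed (range K)"
  shows "\<exists>S. MP K S"
proof -
  have Kl: "linear K" using K by (simp add: bounded_clinear_def bounded_linear.linear)
  define N where "N = {x. K x = 0}"
  have csN: "csubspace N"
    by (simp add: csubspace_def N_def bounded_clinear_zero[OF K] bounded_clinear_add[OF K]
        bounded_clinear_scaleC[OF K])
  have clN: "closed N" unfolding N_def
    by (rule closed_Collect_eq) (use K in \<open>auto simp: bounded_clinear_def intro: linear_continuous_on\<close>)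
  interpret NN: closed_csub N using csN clN by unfold_locales
  have csR: "csubspace (range K)"
    unfolding csubspace_def
  proof (intro conjI ballI allI)
    show "0 \<in> range K" using bounded_clinear_zero[OF K] by (metis rangeI)
    fix x y assume "x \<in> range K" "y \<in> range K"
    then show "x + y \<in> range K" by (auto simp: bounded_clinear_add[OF K, symmetric])
  next
    fix c x assume "x \<in> range K"
    then show "scaleC c x \<in> range K" by (auto simp: bounded_clinear_scaleC[OF K, symmetric])
  qed
  interpret RR: closed_csub "range K" using csR R by unfold_locales
  define Q where "Q x = x - proj N x" for x
  have KQ: "K (Q x) = K x" for x
    using NN.proj_in[of x] by (simp add: Q_def N_def bounded_clinear_diff[OF K])
  have Qeq: "Q a = Q b" if "K a = K b" for a b
  proof -
    have "a - b \<in> N" using that by (simp add: N_def bounded_clinear_diff[OF K])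
    then have "proj N (a - b) = a - b" by (rule NN.proj_id)
    then show ?thesis by (simp add: Q_def NN.proj_diff algebra_simps)
  qed
  have Qadd: "Q (a + b) = Q a + Q b" for a b by (simp add: Q_def NN.proj_add)
  have QscaleC: "Q (scaleC c a) = scaleC c (Q a)" for c a by (simp add: Q_def NN.proj_scaleC scaleC_diff_right)
  have QQ: "Q (Q x) = Q x" for x by (rule Qeq) (simp add: KQ)
  have Qadj: "cinner (Q x) y = cinner x (Q y)" for x y
    by (simp add: Q_def cinner_diff_left cinner_diff_right NN.proj_selfadj)
  obtain C where C: "C > 0" "\<And>y. y \<in> range K \<Longrightarrow> \<exists>x. K x = y \<and> norm x \<le> C * norm y"
    using open_mapping_bound[of K] K R unfolding bounded_clinear_def by blast
  have Qbound: "norm (Q x) \<le> C * norm (K x)" for x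
  proof -
    obtain x' where x': "K x' = K x" "norm x' \<le> C * norm (K x)" using C(2)[of "K x"] by blast
    have "Q x = Q x'" using x' by (intro Qeq) simp
    also have "norm (Q x') \<le> norm x'" unfolding Q_def by (rule NN.proj_compl_norm_le)
    finally show ?thesis using x' by simp
  qed
  define pre where "pre y = (SOME x. K x = proj (range K) y)" for y
  have Kpre: "K (pre y) = proj (range K) y" for y
    unfolding pre_def using RR.proj_in[of y] by (metis (mono_tags, lifting) imageE someI)
  define S where "S y = Q (pre y)" for y
  have KS: "K (S y) = proj (range K) y" for y by (simp add: S_def KQ Kpre)
  have SK: "S (K x) = Q x" for x
    unfolding S_def by (rule Qeq) (simp add: Kpre RR.proj_id)
  have Sadd: "S (a + b) = S a + S b" for a b
  proof -
    have "S (a + b) = Q (pre a + pre b)"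
      unfolding S_def by (rule Qeq) (simp add: Kpre bounded_clinear_add[OF K] RR.proj_add)
    then show ?thesis by (simp add: Qadd S_def)
  qed
  have SscaleC: "S (scaleC c a) = scaleC c (S a)" for c a
  proof -
    have "S (scaleC c a) = Q (scaleC c (pre a))"
      unfolding S_def by (rule Qeq) (simp add: Kpre bounded_clinear_scaleC[OF K] RR.proj_scaleC)
    then show ?thesis by (simp add: QscaleC S_def)
  qed
  have Sbound: "norm (S y) \<le> norm y * C" for y
  proof -
    have "norm (S y) \<le> C * norm (K (pre y))" unfolding S_def by (rule Qbound)
    also have "\<dots> = C * norm (proj (range K) y)" by (simp add: Kpre)
    also have "\<dots> \<le> C * norm y" using C(1) by (intro mult_left_mono RR.proj_norm_le) auto
    finally show ?thesis by (simp add: mult.commute)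
  qed
  have bS: "bounded_clinear S"
    unfolding bounded_clinear_def
  proof (intro conjI allI)
    show "bounded_linear S"
      by (rule bounded_linear_intro[OF Sadd _ Sbound]) (simp add: scaleR_scaleC SscaleC)
    show "S (scaleC c x) = scaleC c (S x)" for c x by (rule SscaleC)
  qed
  have "MP K S"
    unfolding MP_def is_adjoint_def
  proof (intro conjI allI bS)
    show "K \<circ> S \<circ> K = K" by (simp add: fun_eq_iff SK KQ)
    show "S \<circ> K \<circ> S = S"
    proof (rule ext)
      fix y show "(S \<circ> K \<circ> S) y = S y" using SK[of "S y"] by (simp add: S_def QQ)
    qed
    show "cinner ((K \<circ> S) x) y = cinner x ((K \<circ> S) y)" for x y by (simp add: KS RR.proj_selfadj)
    show "cinner ((S \<circ> K) x) y = cinner x ((S \<circ> K) y)" for x y by (simp add: SK Qadj)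
  qed
  then show ?thesis by blast
qed

lemma pinv_MP:
  fixes K :: "'a::chilbert_space \<Rightarrow> 'a"
  assumes K: "bounded_clinear K" and R: "closed (range K)"
  shows "MP K (pinv K)"
proof -
  obtain S where S: "MP K S" using MP_exists[OF K R] by blast
  have "pinv K = S" unfolding pinv_def
    using S MP_unique[OF _ S] unfolding MP_def by (intro the_equality) blast+
  then show ?thesis using S by simp
qed




lemma polar_complex:
  "a * cnj b = (1/4) * (complex_of_real ((cmod (a + b))\<^sup>2) - complex_of_real ((cmod (a - b))\<^sup>2)
     + \<i> * complex_of_real ((cmod (a + \<i> * b))\<^sup>2) - \<i> * complex_of_real ((cmod (a - \<i> * b))\<^sup>2))"
  unfolding complex_norm_square by (simp add: algebra_simps)

lemma norm_add_scaleC_complex: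
  "complex_of_real ((norm (u + scaleC c v))\<^sup>2) =
     cinner u u + cnj c * cinner u v + c * cnj (cinner u v) + c * cnj c * cinner v v"
  unfolding cinner_self[symmetric]
  by (simp add: cinner_add_left cinner_add_right cinner_scaleC_left cinner_scaleC_right
      cinner_commute[of v u] algebra_simps)

lemma polar_vec:
  "cinner u v = (1/4) * (complex_of_real ((norm (u + v))\<^sup>2) - complex_of_real ((norm (u - v))\<^sup>2)
     + \<i> * complex_of_real ((norm (u + scaleC \<i> v))\<^sup>2) - \<i> * complex_of_real ((norm (u - scaleC \<i> v))\<^sup>2))"
proof -
  have m1: "u - v = u + scaleC (-1) v" by (simp add: scaleC_minus_left scaleC_one)
  have m2: "u - scaleC \<i> v = u + scaleC (-\<i>) v" by (simp add: scaleC_minus_left)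
  have p1: "u + v = u + scaleC 1 v" by (simp add: scaleC_one)
  show ?thesis
    unfolding m1 m2 
    apply (subst (1) p1)
    unfolding norm_add_scaleC_complex
    by (simp add: algebra_simps)
qed

lemma parseval_hbi:
  assumes wm: "weakly_measurable M F"
    and P: "\<And>f. (\<integral>\<^sup>+\<omega>. ennreal ((cmod (cinner f (F \<omega>)))\<^sup>2) \<partial>M) = ennreal ((norm (A f))\<^sup>2)"
  shows "has_bochner_integral M (\<lambda>\<omega>. (cmod (cinner f (F \<omega>)))\<^sup>2) ((norm (A f))\<^sup>2)"
proof (rule has_bochner_integral_nn_integral)
  have [measurable]: "(\<lambda>\<omega>. cinner f (F \<omega>)) \<in> borel_measurable M"
    using wm by (simp add: weakly_measurable_def)
  show "(\<lambda>\<omega>. (cmod (cinner f (F \<omega>)))\<^sup>2) \<in> borel_measurable M" by measurable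
qed (auto simp: P)

lemma polar_int:
  assumes wm: "weakly_measurable M F"
    and P: "\<And>f. (\<integral>\<^sup>+\<omega>. ennreal ((cmod (cinner f (F \<omega>)))\<^sup>2) \<partial>M) = ennreal ((norm (A f))\<^sup>2)"
    and Aadd: "\<And>x y. A (x + y) = A x + A y" and Asc: "\<And>c x. A (scaleC c x) = scaleC c (A x)"
  shows "has_bochner_integral M (\<lambda>\<omega>. cinner x (F \<omega>) * cinner (F \<omega>) h) (cinner (A x) (A h))"
proof -
  define g where "g u \<omega> = complex_of_real ((cmod (cinner u (F \<omega>)))\<^sup>2)" for u \<omega>
  have hb: "has_bochner_integral M (g u) (complex_of_real ((norm (A u))\<^sup>2))" for u
    unfolding g_def
    by (rule has_bochner_integral_bounded_linear[OF bounded_linear_of_real parseval_hbi[OF wm P]])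
  have "has_bochner_integral M (\<lambda>\<omega>. (1/4) * (g (x + h) \<omega> - g (x - h) \<omega> + \<i> * g (x + scaleC \<i> h) \<omega>
          - \<i> * g (x - scaleC \<i> h) \<omega>))
        ((1/4) * (complex_of_real ((norm (A (x + h)))\<^sup>2) - complex_of_real ((norm (A (x - h)))\<^sup>2)
          + \<i> * complex_of_real ((norm (A (x + scaleC \<i> h)))\<^sup>2)
          - \<i> * complex_of_real ((norm (A (x - scaleC \<i> h)))\<^sup>2)))"
    (is "has_bochner_integral M ?f ?v")
    by (intro has_bochner_integral_mult_right has_bochner_integral_diff has_bochner_integral_add hb)
  moreover have pw: "(1/4) * (g (x + h) \<omega> - g (x - h) \<omega> + \<i> * g (x + scaleC \<i> h) \<omega>
          - \<i> * g (x - scaleC \<i> h) \<omega>) = cinner x (F \<omega>) * cinner (F \<omega>) h" for \<omega>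
    unfolding g_def
    using polar_complex[of "cinner x (F \<omega>)" "cinner h (F \<omega>)"]
    by (simp add: cinner_add_left cinner_diff_left cinner_scaleC_left cinner_commute[of "F \<omega>" h])
  moreover have Adiff: "A (x - y) = A x - A y" for y
  proof -
    have "A (x - y) = A (x + scaleC (-1) y)" by (simp add: scaleC_minus_left scaleC_one)
    also have "\<dots> = A x + scaleC (-1) (A y)" by (simp only: Aadd Asc)
    also have "\<dots> = A x - A y" by (simp add: scaleC_minus_left scaleC_one)
    finally show ?thesis .
  qed
  moreover have eqv: "?v = cinner (A x) (A h)"
    unfolding Aadd Asc Adiff by (rule polar_vec[symmetric])
  ultimately show ?thesis
    using has_bochner_integral_cong[of M M ?f "\<lambda>\<omega>. cinner x (F \<omega>) * cinner (F \<omega>) h" ?v "cinner (A x) (A h)"]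
    by simp
qed




theorem theorem3p4:
  fixes M :: "'b measure" and K :: "'a::chilbert_space \<Rightarrow> 'a" and F :: "'b \<Rightarrow> 'a"
  assumes "separable_space TYPE('a)"
    and "bounded_clinear K"
    and "closed (range K)"
    and "parseval_cont_K_frame M K F"
  shows "dual_cont_K_bessel M K F (\<lambda>\<omega>. pinv K (F \<omega>)) \<and>
         (\<forall>G. dual_cont_K_bessel M K F G \<longrightarrow>
              analysis_norm M (\<lambda>\<omega>. pinv K (F \<omega>)) \<le> analysis_norm M G)"
proof -
  note K = assms(2) and R = assms(3)
  define Ks where "Ks = adj K"
  have adjK: "is_adjoint K Ks" unfolding Ks_def by (rule adj_exists[OF K])
  have adjK': "cinner (K x) y = cinner x (Ks y)" for x y using adjK by (simp add: is_adjoint_def)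
  define T where "T = pinv K"
  have "MP K T" unfolding T_def by (rule pinv_MP[OF K R])
  then have bT: "bounded_clinear T" and KTK: "\<And>x. K (T (K x)) = K x" and TKT: "\<And>y. T (K (T y)) = T y"
    and sa2: "\<And>x y. cinner (T (K x)) y = cinner x (T (K y))"
    unfolding MP_def is_adjoint_def by (auto simp: fun_eq_iff)
  define L where "L = adj T"
  have adjT: "cinner (T x) y = cinner x (L y)" for x y
    using adj_exists[OF bT] by (simp add: is_adjoint_def L_def)
  have wmF: "weakly_measurable M F" and PF: "\<And>f. (\<integral>\<^sup>+\<omega>. ennreal ((cmod (cinner f (F \<omega>)))\<^sup>2) \<partial>M) = ennreal ((norm (Ks f))\<^sup>2)"
    using assms(4) by (auto simp: parseval_cont_K_frame_def Ks_def)
  have Ksadd: "Ks (x + y) = Ks x + Ks y" and Kssc: "Ks (scaleC c x) = scaleC c (Ks x)" for x y c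
    using adjoint_linear[OF adjK] by auto
  have f1: "cinner f (T y) = cinner (L f) y" for f y
    by (metis adjT cinner_commute)
  have f2: "Ks (L f) = T (K f)" for f
  proof (rule cinner_ext)
    fix z
    have "cinner z (Ks (L f)) = cinner (K z) (L f)" by (simp add: adjK')
    also have "\<dots> = cinner (T (K z)) f" by (simp add: adjT)
    also have "\<dots> = cinner z (T (K f))" by (rule sa2)
    finally show "cinner z (Ks (L f)) = cinner z (T (K f))" .
  qed
  have TKTK: "T (K (T (K f))) = T (K f)" for f by (simp add: TKT)
  have f4: "norm (T (K f)) \<le> norm f" for f
  proof -
    define u where "u = T (K f)"
    have "complex_of_real ((norm u)\<^sup>2) = cinner u u" by (simp add: cinner_self)
    also have "\<dots> = cinner f (T (K u))" unfolding u_def by (rule sa2)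
    also have "\<dots> = cinner f u" by (simp add: u_def TKTK)
    finally have "(norm u)\<^sup>2 = cmod (cinner f u)"
      by (metis norm_of_real abs_of_nonneg zero_le_power2)
    also have "\<dots> \<le> norm f * norm u" by (rule cauchy_schwarz)
    finally have "norm u * norm u \<le> norm f * norm u" by (simp add: power2_eq_square)
    then show ?thesis unfolding u_def[symmetric]
      by (cases "norm u = 0") (auto simp: mult_le_cancel_right)
  qed
  have measF: "(\<lambda>\<omega>. cinner f (F \<omega>)) \<in> borel_measurable M" for f
    using wmF by (simp add: weakly_measurable_def)
  have nnF: "(\<integral>\<^sup>+\<omega>. ennreal ((cmod (cinner f (T (F \<omega>))))\<^sup>2) \<partial>M) = ennreal ((norm (T (K f)))\<^sup>2)" for f
    by (simp add: f1 PF f2)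
  have part1: "dual_cont_K_bessel M K F (\<lambda>\<omega>. T (F \<omega>))"
    unfolding dual_cont_K_bessel_def cont_bessel_def
  proof (intro conjI allI)
    show "weakly_measurable M (\<lambda>\<omega>. T (F \<omega>))"
      unfolding weakly_measurable_def by (simp add: f1 measF)
    show "\<exists>B>0. \<forall>f. (\<integral>\<^sup>+\<omega>. ennreal ((cmod (cinner f (T (F \<omega>))))\<^sup>2) \<partial>M) \<le> ennreal (B * (norm f)\<^sup>2)"
    proof (intro exI[of _ 1] conjI allI)
      fix f
      show "(\<integral>\<^sup>+\<omega>. ennreal ((cmod (cinner f (T (F \<omega>))))\<^sup>2) \<partial>M) \<le> ennreal (1 * (norm f)\<^sup>2)"
        unfolding nnF using f4[of f] by (intro ennreal_leI) (simp add: power_mono)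
    qed simp
    fix f h
    have "(\<integral>\<omega>. cinner f (T (F \<omega>)) * cinner (F \<omega>) h \<partial>M) = (\<integral>\<omega>. cinner (L f) (F \<omega>) * cinner (F \<omega>) h \<partial>M)"
      by (simp add: f1)
    also have "\<dots> = cinner (Ks (L f)) (Ks h)"
      by (rule has_bochner_integral_integral_eq[OF polar_int[OF wmF PF Ksadd Kssc]])
    also have "\<dots> = cinner (K f) h" by (simp add: f2 adjK'[symmetric] KTK)
    finally show "cinner (K f) h = (\<integral>\<omega>. cinner f (T (F \<omega>)) * cinner (F \<omega>) h \<partial>M)" by simp
  qed
  have part2: "analysis_norm M (\<lambda>\<omega>. T (F \<omega>)) \<le> analysis_norm M G"
    if dG: "dual_cont_K_bessel M K F G" for G
  proof -
    from dG have wmG: "weakly_measurable M G"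
      and eqG: "\<And>f h. cinner (K f) h = (\<integral>\<omega>. cinner f (G \<omega>) * cinner (F \<omega>) h \<partial>M)"
      by (auto simp: dual_cont_K_bessel_def cont_bessel_def)
    from dG obtain B where B: "B > 0"
      "\<And>f. (\<integral>\<^sup>+\<omega>. ennreal ((cmod (cinner f (G \<omega>)))\<^sup>2) \<partial>M) \<le> ennreal (B * (norm f)\<^sup>2)"
      by (auto simp: dual_cont_K_bessel_def cont_bessel_def)
    have measG: "(\<lambda>\<omega>. cinner f (G \<omega>)) \<in> borel_measurable M" for f
      using wmG by (simp add: weakly_measurable_def)
    define tG where "tG f = sqrt (enn2real (\<integral>\<^sup>+\<omega>. ennreal ((cmod (cinner f (G \<omega>)))\<^sup>2) \<partial>M))" for f
    have finG: "(\<integral>\<^sup>+\<omega>. ennreal ((cmod (cinner f (G \<omega>)))\<^sup>2) \<partial>M) < top" for f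
      using B(2)[of f] by (meson ennreal_less_top le_less_trans)
    have bdd: "bdd_above (tG ` {f. norm f \<le> 1})"
    proof (rule bdd_aboveI2[of _ _ "sqrt B"])
      fix f :: 'a assume f: "f \<in> {f. norm f \<le> 1}"
      have "enn2real (\<integral>\<^sup>+\<omega>. ennreal ((cmod (cinner f (G \<omega>)))\<^sup>2) \<partial>M) \<le> enn2real (ennreal (B * (norm f)\<^sup>2))"
        by (rule enn2real_mono[OF B(2)]) simp
      also have "\<dots> \<le> B" using B(1) f by (simp add: power_le_one mult_left_le)
      finally show "tG f \<le> sqrt B" unfolding tG_def by simp
    qed
    have key: "norm (T (K f)) \<le> tG f" for f
    proof -
      define u where "u = T (K f)"
      define h where "h = L u"
      define X where "X = (\<integral>\<^sup>+\<omega>. ennreal ((cmod (cinner f (G \<omega>)))\<^sup>2) \<partial>M)"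
      define Z where "Z = (\<integral>\<^sup>+\<omega>. ennreal (cmod (cinner f (G \<omega>)) * cmod (cinner (F \<omega>) h)) \<partial>M)"
      define n where "n = (norm u)\<^sup>2"
      have n0: "n \<ge> 0" by (simp add: n_def)
      have Ksh: "Ks h = u" by (simp add: h_def f2 u_def TKTK)
      have nb: "(\<integral>\<^sup>+\<omega>. ennreal ((cmod (cinner (F \<omega>) h))\<^sup>2) \<partial>M) = ennreal n"
      proof -
        have "cmod (cinner (F \<omega>) h) = cmod (cinner h (F \<omega>))" for \<omega>
          by (metis cinner_commute complex_mod_cnj)
        then show ?thesis by (simp add: PF Ksh n_def)
      qed
      have lhs: "cinner (K f) h = complex_of_real n"
        by (simp add: h_def adjT[symmetric] u_def[symmetric] cinner_self n_def)
      have mb: "(\<lambda>\<omega>. cinner (F \<omega>) h) \<in> borel_measurable M"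
      proof -
        have "(\<lambda>\<omega>. cinner (F \<omega>) h) = (\<lambda>\<omega>. cnj (cinner h (F \<omega>)))"
          by (metis cinner_commute)
        moreover have "(\<lambda>\<omega>. cnj (cinner h (F \<omega>))) \<in> borel_measurable M"
          by (rule borel_measurable_continuous_on[OF _ measF[of h]]) (intro continuous_intros)
        ultimately show ?thesis by simp
      qed
      have I: "ennreal n \<le> Z"
      proof (cases "integrable M (\<lambda>\<omega>. cinner f (G \<omega>) * cinner (F \<omega>) h)")
        case True
        have "ennreal n = ennreal (norm (\<integral>\<omega>. cinner f (G \<omega>) * cinner (F \<omega>) h \<partial>M))"
          using eqG[of f h] lhs n0 by (metis abs_of_nonneg norm_of_real)
        also have "\<dots> \<le> (\<integral>\<^sup>+\<omega>. norm (cinner f (G \<omega>) * cinner (F \<omega>) h) \<partial>M)"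
          by (rule integral_norm_bound_ennreal[OF True])
        also have "\<dots> = Z" by (simp add: Z_def norm_mult)
        finally show ?thesis .
      next
        case False
        then have "n = 0" using eqG[of f h] lhs by (simp add: not_integrable_integral_eq)
        then show ?thesis by simp
      qed
      have CS: "Z\<^sup>2 \<le> X * ennreal n"
      proof -
        have [measurable]: "(\<lambda>\<omega>. cinner f (G \<omega>)) \<in> borel_measurable M" by (rule measG)
        have [measurable]: "(\<lambda>\<omega>. cinner (F \<omega>) h) \<in> borel_measurable M" by (rule mb)
        have "(\<integral>\<^sup>+\<omega>. ennreal (cmod (cinner f (G \<omega>))) * ennreal (cmod (cinner (F \<omega>) h)) \<partial>M)\<^sup>2
          \<le> (\<integral>\<^sup>+\<omega>. ennreal (cmod (cinner f (G \<omega>))) ^ 2 \<partial>M) * (\<integral>\<^sup>+\<omega>. ennreal (cmod (cinner (F \<omega>) h)) ^ 2 \<partial>M)"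
          by (rule Cauchy_Schwarz_nn_integral) measurable
        then show ?thesis
          by (simp add: Z_def X_def nb[symmetric] ennreal_mult[symmetric] ennreal_power)
      qed
      obtain x where x: "x \<ge> 0" "X = ennreal x"
        using finG[of f] unfolding X_def less_top_ennreal by blast
      have "ennreal (n\<^sup>2) = (ennreal n)\<^sup>2" by (simp add: ennreal_power n0)
      also have "\<dots> \<le> Z\<^sup>2" using I by (intro power_mono) auto
      also have "\<dots> \<le> ennreal (x * n)" using CS x by (simp add: ennreal_mult n0)
      finally have "n\<^sup>2 \<le> x * n" using x n0 by (simp add: ennreal_le_iff)
      then have "n \<le> x" using n0 x
        by (cases "n = 0") (auto simp: power2_eq_square mult_le_cancel_right)
      then have "sqrt n \<le> sqrt x" by simp
      moreover have "sqrt n = norm u" by (simp add: n_def)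
      moreover have "tG f = sqrt x" using x by (simp add: tG_def X_def[symmetric])
      ultimately show ?thesis by (simp add: u_def)
    qed
    have "analysis_norm M (\<lambda>\<omega>. T (F \<omega>)) = (SUP f\<in>{f. norm f \<le> 1}. norm (T (K f)))"
      unfolding analysis_norm_def by (simp add: nnF)
    also have "\<dots> \<le> (SUP f\<in>{f. norm f \<le> 1}. tG f)"
    proof (rule cSUP_least)
      show "{f::'a. norm f \<le> 1} \<noteq> {}" by (auto intro: exI[of _ 0])
      fix f :: 'a assume "f \<in> {f. norm f \<le> 1}"
      then show "norm (T (K f)) \<le> (SUP f\<in>{f. norm f \<le> 1}. tG f)"
        using key by (intro cSUP_upper2[OF bdd]) auto
    qed
    also have "\<dots> = analysis_norm M G" unfolding analysis_norm_def tG_def by simp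
    finally show ?thesis .
  qed
  show ?thesis using part1 part2 unfolding T_def by blast
qed


end
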